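(* Let $a,b,d,f,c\in\mathbb{C}$ with $b\neq0$ and $d\neq0$. Then for every orbit $(z_1(n),z_2(n))$ of the system, $(z_1(n))$ is bounded if and only if $(z_2(n))$ is bounded.
   Context: The 2D coupled quadratic system with connectivity matrix $A=\begin{pmatrix}a&b\\ d&f\end{pmatrix}$ and parameter $c\in\mathbb{C}$ is the iteration $z_1(n+1)=(az_1(n)+bz_2(n))^2+c$, $z_2(n+1)=(dz_1(n)+fz_2(n))^2+c$, $n\ge 0$, from an initial condition $(z_1(0),z_2(0))\in\mathbb{C}^2$. *)

theory Defs
  imports "HOL-Analysis.Analysis"
begin

end

theory Submission
  imports Defs
begin

lemma aux:
  fixes p q c :: complex and x y :: "nat \<Rightarrow> complex"
  assumes q: "q \<noteq> 0" and rec: "\<And>n. x (Suc n) = (p * x n + q * y n)^2 + c"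
    and bx: "bounded (range x)"
  shows "bounded (range y)"
proof -
  obtain B where B: "\<And>n. norm (x n) \<le> B" using bx unfolding bounded_iff by auto
  have "norm (y n) \<le> (norm p * B + 1 + B + norm c) / norm q" for n
  proof -
    let ?w = "p * x n + q * y n"
    have "norm (?w^2) \<le> B + norm c"
    proof -
      have "?w^2 = x (Suc n) - c" using rec[of n] by simp
      also have "norm \<dots> \<le> norm (x (Suc n)) + norm c" by (rule norm_triangle_ineq4)
      finally show ?thesis using B[of "Suc n"] by linarith
    qed
    hence w2: "norm ?w ^ 2 \<le> B + norm c" by (simp add: norm_power)
    have gen: "t \<le> 1 + t ^ 2" for t :: real
    proof -
      have "0 \<le> (t - 1)^2" by simp
      hence "0 \<le> t*t - 2*t + 1" by (simp add: power2_eq_square algebra_simps)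
      moreover have "0 \<le> t*t" by simp
      ultimately show ?thesis unfolding power2_eq_square by (cases "t \<le> 0") linarith+
    qed
    have "norm ?w \<le> 1 + norm ?w ^ 2" by (rule gen)
    hence w: "norm ?w \<le> 1 + B + norm c" using w2 by linarith
    have "q * y n = ?w - p * x n" by simp
    hence "norm (q * y n) \<le> norm ?w + norm (p * x n)" using norm_triangle_ineq4 by metis
    also have "norm (p * x n) \<le> norm p * B" by (simp add: norm_mult B mult_left_mono)
    finally have "norm q * norm (y n) \<le> norm p * B + 1 + B + norm c" using w by (simp add: norm_mult)
    thus ?thesis using q by (simp add: field_simps)
  qed
  thus ?thesis unfolding bounded_iff by auto
qed

theorem mainTheorem6:
  fixes a b d f c :: complex and z1 z2 :: "nat \<Rightarrow> complex"
  assumes "b \<noteq> 0" and "d \<noteq> 0"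
    and "\<And>n. z1 (Suc n) = (a * z1 n + b * z2 n)^2 + c"
    and "\<And>n. z2 (Suc n) = (d * z1 n + f * z2 n)^2 + c"
  shows "bounded (range z1) \<longleftrightarrow> bounded (range z2)"
proof
  assume "bounded (range z1)" thus "bounded (range z2)" using aux[of b z1 a z2 c, OF assms(1) assms(3)] by blast
next
  have r: "\<And>n. z2 (Suc n) = (f * z2 n + d * z1 n)^2 + c" using assms(4) by (simp add: add.commute)
  assume "bounded (range z2)" thus "bounded (range z1)" using aux[of d z2 f z1 c, OF assms(2) r] by blast
qed

end
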